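(* Consider the ride-hailing model in the context with $L=2$ regions, demand rates $b_{12}=b_{22}=0$, $b_{11}>0$, $b_{21}>0$, and driving cost rate $c=0$. Then for all trip times, all $R\in(0,1)$, $M\ge0$, $N>0$, and every AV-first strategy, the AV-first profit is at least $\tfrac45$ of the optimal value of $\mathcal{OPT}$ (performance loss at most $20\%$); moreover the maximum performance loss $20\%$ is achieved when $M=\tfrac{b_{11}t_{11}}{2}$, $N=b_{11}t_{11}$, $t_{12}=t_{21}$ and $R\to1$ (i.e. for these parameters the performance loss $1-(\text{AV-first profit})/(\text{optimal value})$ tends to $1/5$ as $R\to1$).
   Context: Model. There are $L$ regions $\{1,\dots,L\}$. For regions $i,j$, $b_{ij}\ge0$ is the customer rate from $i$ to $j$; $b_i=\sum_j b_{ij}$ (assumed $>0$), $q_{ij}=b_{ij}/b_i$. $t_{ij}\ge0$ is the trip time of a customer trip from $i$ to $j$ (with $t_{ij}>0$ for $i\ne j$ and here $t_{11}>0$); the empty repositioning time from $i$ to $\alpha$ is $t_{i\alpha}$ for $\alpha\ne i$ and $0$ for $\alpha=i$. Constants: $p>0$, $c\ge0$, $R\in(0,1)$, CV fleet mass $N>0$, AV fleet mass $M\ge0$. For $i,\alpha$: $\tau^{dr}_{i\alpha}=\mathbf 1[\alpha\ne i]\,t_{i\alpha}+\sum_j q_{\alpha j}t_{\alpha j}$, $r^A_{i\alpha}=p\sum_j q_{\alpha j}t_{\alpha j}-c\tau^{dr}_{i\alpha}$, $r^C_{i\alpha}=p(1-R)\sum_j q_{\alpha j}t_{\alpha j}-c\tau^{dr}_{i\alpha}$,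 $r^{C2P}_{i\alpha}=pR\sum_j q_{\alpha j}t_{\alpha j}$. A matrix $\bm x\in\mathbb R^{L\times L}_{\ge0}$ satisfies flow balance if $\sum_j(\sum_k x_{kj})q_{ji}=\sum_\alpha x_{i\alpha}$ for all $i$. $\mathcal{CV}(\bm b^C)$: maximize $N\log\sum_{i,\alpha}r^C_{i\alpha}x_{i\alpha}-\sum_{i,\alpha}\tau^{dr}_{i\alpha}x_{i\alpha}$ over $\bm x\ge0$ satisfying flow balance and $\sum_j x_{ji}\le b^C_i$ for all $i$; $\pi(\bm b^C)=\sum_{i,\alpha}r^{C2P}_{i\alpha}x_{i\alpha}$ for an optimal solution $\bm x$ (same for all optimal solutions). $\mathcal{OPT}$: maximize $\sum_{i,\alpha}r^A_{i\alpha}x^A_{i\alpha}+\pi(\bm b^C)$ over $\bm b^C\in\mathbb R^L_{\ge0}$, $\bm x^A\in\mathbb R^{L\times L}_{\ge0}$ subject to $\sum_j x^A_{ji}+b^C_i\le b_i$ for all $i$, flow balance for $\bm x^A$, and $\sum_{i,\alpha}\tau^{dr}_{i\alpha}x^A_{i\alpha}\le M$. AV-first policy: an AV-first strategy $\hat{\bm x}^A$ maximizes $\sum_{i,\alpha}r^A_{i\alpha}x^A_{i\alpha}$ over $\bm x^A\ge0$ with $\sum_j x^A_{ji}\le b_i$ for all $i$, flow balance, and $\sum_{i,\alpha}\tau^{dr}_{i\alpha}x^A_{i\alpha}\le M$; the residual demand $\hat b^C_i=b_i-\sum_j\hat x^A_{ji}$ is revealed to CVs, and the AV-first profit is $\sum_{i,\alpha}r^A_{i\alpha}\hat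 x^A_{i\alpha}+\pi(\hat{\bm b}^C)$. *)

theory Defs
  imports "HOL-Analysis.Analysis"
begin

text \<open>Ride-hailing model with regions 1..L. Matrices are functions nat => nat => real;
  only the entries with indices in {1..L} are relevant.\<close>

definition brate :: "nat \<Rightarrow> (nat \<Rightarrow> nat \<Rightarrow> real) \<Rightarrow> nat \<Rightarrow> real" where
  "brate L b i = (\<Sum>j=1..L. b i j)"

definition qq :: "nat \<Rightarrow> (nat \<Rightarrow> nat \<Rightarrow> real) \<Rightarrow> nat \<Rightarrow> nat \<Rightarrow> real" where
  "qq L b i j = b i j / brate L b i"

definition avgtrip :: "nat \<Rightarrow> (nat \<Rightarrow> nat \<Rightarrow> real) \<Rightarrow> (nat \<Rightarrow> nat \<Rightarrow> real) \<Rightarrow> nat \<Rightarrow> real" where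
  "avgtrip L b t a = (\<Sum>j=1..L. qq L b a j * t a j)"

definition tau_dr :: "nat \<Rightarrow> (nat \<Rightarrow> nat \<Rightarrow> real) \<Rightarrow> (nat \<Rightarrow> nat \<Rightarrow> real) \<Rightarrow> nat \<Rightarrow> nat \<Rightarrow> real" where
  "tau_dr L b t i a = (if a \<noteq> i then t i a else 0) + avgtrip L b t a"

definition rA :: "nat \<Rightarrow> (nat \<Rightarrow> nat \<Rightarrow> real) \<Rightarrow> (nat \<Rightarrow> nat \<Rightarrow> real) \<Rightarrow> real \<Rightarrow> real
    \<Rightarrow> nat \<Rightarrow> nat \<Rightarrow> real" where
  "rA L b t p c i a = p * avgtrip L b t a - c * tau_dr L b t i a"

definition rC :: "nat \<Rightarrow> (nat \<Rightarrow> nat \<Rightarrow> real) \<Rightarrow> (nat \<Rightarrow> nat \<Rightarrow> real) \<Rightarrow> real \<Rightarrow> real \<Rightarrow> real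
    \<Rightarrow> nat \<Rightarrow> nat \<Rightarrow> real" where
  "rC L b t p c R i a = p * (1 - R) * avgtrip L b t a - c * tau_dr L b t i a"

definition rC2P :: "nat \<Rightarrow> (nat \<Rightarrow> nat \<Rightarrow> real) \<Rightarrow> (nat \<Rightarrow> nat \<Rightarrow> real) \<Rightarrow> real \<Rightarrow> real
    \<Rightarrow> nat \<Rightarrow> nat \<Rightarrow> real" where
  "rC2P L b t p R i a = p * R * avgtrip L b t a"

definition msum :: "nat \<Rightarrow> (nat \<Rightarrow> nat \<Rightarrow> real) \<Rightarrow> (nat \<Rightarrow> nat \<Rightarrow> real) \<Rightarrow> real" where
  "msum L f x = (\<Sum>i=1..L. \<Sum>a=1..L. f i a * x i a)"

definition colsum :: "nat \<Rightarrow> (nat \<Rightarrow> nat \<Rightarrow> real) \<Rightarrow> nat \<Rightarrow> real" where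
  "colsum L x i = (\<Sum>j=1..L. x j i)"

definition nonneg :: "nat \<Rightarrow> (nat \<Rightarrow> nat \<Rightarrow> real) \<Rightarrow> bool" where
  "nonneg L x \<longleftrightarrow> (\<forall>i\<in>{1..L}. \<forall>a\<in>{1..L}. 0 \<le> x i a)"

definition flow_balance :: "nat \<Rightarrow> (nat \<Rightarrow> nat \<Rightarrow> real) \<Rightarrow> (nat \<Rightarrow> nat \<Rightarrow> real) \<Rightarrow> bool" where
  "flow_balance L b x \<longleftrightarrow>
     (\<forall>i\<in>{1..L}. (\<Sum>j=1..L. colsum L x j * qq L b j i) = (\<Sum>a=1..L. x i a))"

definition cv_feasible :: "nat \<Rightarrow> (nat \<Rightarrow> nat \<Rightarrow> real) \<Rightarrow> (nat \<Rightarrow> real) \<Rightarrow> (nat \<Rightarrow> nat \<Rightarrow> real) \<Rightarrow> bool" where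
  "cv_feasible L b bC x \<longleftrightarrow> nonneg L x \<and> flow_balance L b x \<and> (\<forall>i\<in>{1..L}. colsum L x i \<le> bC i)"

definition cv_obj :: "nat \<Rightarrow> (nat \<Rightarrow> nat \<Rightarrow> real) \<Rightarrow> (nat \<Rightarrow> nat \<Rightarrow> real) \<Rightarrow> real \<Rightarrow> real \<Rightarrow> real
    \<Rightarrow> real \<Rightarrow> (nat \<Rightarrow> nat \<Rightarrow> real) \<Rightarrow> ereal" where
  "cv_obj L b t p c R N x =
     (let S = msum L (rC L b t p c R) x
      in if 0 < S then ereal (N * ln S - msum L (tau_dr L b t) x) else -\<infinity>)"

definition cv_optimal :: "nat \<Rightarrow> (nat \<Rightarrow> nat \<Rightarrow> real) \<Rightarrow> (nat \<Rightarrow> nat \<Rightarrow> real) \<Rightarrow> real \<Rightarrow> real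
    \<Rightarrow> real \<Rightarrow> real \<Rightarrow> (nat \<Rightarrow> real) \<Rightarrow> (nat \<Rightarrow> nat \<Rightarrow> real) \<Rightarrow> bool" where
  "cv_optimal L b t p c R N bC x \<longleftrightarrow> cv_feasible L b bC x \<and>
     (\<forall>y. cv_feasible L b bC y \<longrightarrow> cv_obj L b t p c R N y \<le> cv_obj L b t p c R N x)"

definition cv_pi :: "nat \<Rightarrow> (nat \<Rightarrow> nat \<Rightarrow> real) \<Rightarrow> (nat \<Rightarrow> nat \<Rightarrow> real) \<Rightarrow> real \<Rightarrow> real
    \<Rightarrow> real \<Rightarrow> real \<Rightarrow> (nat \<Rightarrow> real) \<Rightarrow> real" where
  "cv_pi L b t p c R N bC = msum L (rC2P L b t p R) (SOME x. cv_optimal L b t p c R N bC x)"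

definition opt_feasible :: "nat \<Rightarrow> (nat \<Rightarrow> nat \<Rightarrow> real) \<Rightarrow> (nat \<Rightarrow> nat \<Rightarrow> real) \<Rightarrow> real
    \<Rightarrow> (nat \<Rightarrow> real) \<Rightarrow> (nat \<Rightarrow> nat \<Rightarrow> real) \<Rightarrow> bool" where
  "opt_feasible L b t M bC xA \<longleftrightarrow> (\<forall>i\<in>{1..L}. 0 \<le> bC i) \<and> nonneg L xA \<and>
     (\<forall>i\<in>{1..L}. colsum L xA i + bC i \<le> brate L b i) \<and> flow_balance L b xA \<and>
     msum L (tau_dr L b t) xA \<le> M"

definition opt_value :: "nat \<Rightarrow> (nat \<Rightarrow> nat \<Rightarrow> real) \<Rightarrow> (nat \<Rightarrow> nat \<Rightarrow> real) \<Rightarrow> real \<Rightarrow> real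
    \<Rightarrow> real \<Rightarrow> real \<Rightarrow> real \<Rightarrow> real" where
  "opt_value L b t p c R N M =
     Sup {msum L (rA L b t p c) xA + cv_pi L b t p c R N bC | bC xA. opt_feasible L b t M bC xA}"

definition av_feasible :: "nat \<Rightarrow> (nat \<Rightarrow> nat \<Rightarrow> real) \<Rightarrow> (nat \<Rightarrow> nat \<Rightarrow> real) \<Rightarrow> real
    \<Rightarrow> (nat \<Rightarrow> nat \<Rightarrow> real) \<Rightarrow> bool" where
  "av_feasible L b t M xA \<longleftrightarrow> nonneg L xA \<and> (\<forall>i\<in>{1..L}. colsum L xA i \<le> brate L b i) \<and>
     flow_balance L b xA \<and> msum L (tau_dr L b t) xA \<le> M"

definition av_first :: "nat \<Rightarrow> (nat \<Rightarrow> nat \<Rightarrow> real) \<Rightarrow> (nat \<Rightarrow> nat \<Rightarrow> real) \<Rightarrow> real \<Rightarrow> real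
    \<Rightarrow> real \<Rightarrow> (nat \<Rightarrow> nat \<Rightarrow> real) \<Rightarrow> bool" where
  "av_first L b t p c M xA \<longleftrightarrow> av_feasible L b t M xA \<and>
     (\<forall>y. av_feasible L b t M y \<longrightarrow> msum L (rA L b t p c) y \<le> msum L (rA L b t p c) xA)"

definition av_first_profit :: "nat \<Rightarrow> (nat \<Rightarrow> nat \<Rightarrow> real) \<Rightarrow> (nat \<Rightarrow> nat \<Rightarrow> real) \<Rightarrow> real \<Rightarrow> real
    \<Rightarrow> real \<Rightarrow> real \<Rightarrow> (nat \<Rightarrow> nat \<Rightarrow> real) \<Rightarrow> real" where
  "av_first_profit L b t p c R N xA =
     msum L (rA L b t p c) xA + cv_pi L b t p c R N (\<lambda>i. brate L b i - colsum L xA i)"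

end

theory Submission
  imports Defs
begin


definition fcv :: "real \<Rightarrow> real \<Rightarrow> real \<Rightarrow> real \<Rightarrow> real" where
  "fcv N k a c = min N (min (max a (N/k)) (a + c))"

lemma fcv_mono: "a \<le> a' \<Longrightarrow> c \<le> c' \<Longrightarrow> fcv N k a c \<le> fcv N k a' c'"
  unfolding fcv_def by (auto simp: min_def max_def)

lemma key_R1:
  fixes A B k N M w1 w2 v1 v2 :: real
  assumes A: "0 < A" and B: "0 < B" and k: "1 < k" and N: "0 < N" and M: "0 \<le> M"
    and w1: "w1 = min M A" and w2: "w2 = min ((M - w1)/k) B"
    and v: "0 \<le> v1" "0 \<le> v2" "v1 \<le> A" "v2 \<le> B" "v1 + k * v2 \<le> M"
  shows "v1 + v2 + fcv N k (A - v1) (B - v2) \<le> 5/4 * (w1 + w2 + fcv N k (A - w1) (B - w2))"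
    and "v1 + v2 \<le> w1 + w2"
    and "0 \<le> w1 + w2" "0 \<le> fcv N k (A - w1) (B - w2)"
proof -
  define P where "P = N / k"
  have kP: "k * P = N" using k by (simp add: P_def)
  have P0: "0 < P" using N k by (simp add: P_def)
  have PN: "P < N" using mult_strict_right_mono[OF k P0] kP by simp
  define s where "s = v1 + v2"
  define U where "U = w1 + w2"
  have w1r: "0 \<le> w1" "w1 \<le> A" "w1 \<le> M" using w1 M A by auto
  have w2r: "0 \<le> w2" "w2 \<le> B" using w2 w1r k B by auto
  have sU: "s \<le> U"
  proof (cases "M \<le> A")
    case True
    then have "w1 = M" "w2 = 0" using w1 w2 B by auto
    moreover have "v2 \<le> k * v2" using mult_right_mono[of 1 k v2] v k by simp
    ultimately show ?thesis using v by (simp add: s_def U_def)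
  next
    case False
    then have w1A: "w1 = A" using w1 by auto
    have "k * s \<le> (k - 1) * v1 + M" using v by (simp add: s_def algebra_simps)
    also have "\<dots> \<le> (k - 1) * A + M" using v k by (simp add: mult_left_mono)
    finally have "k * s \<le> (k - 1) * A + M" .
    then have "s \<le> ((k-1) * A + M) / k" using k by (simp add: pos_le_divide_eq mult.commute)
    also have "\<dots> = A + (M - A) / k" using k by (simp add: field_simps)
    finally have "s \<le> A + (M - A)/k" .
    moreover have "s \<le> A + B" using v by (simp add: s_def)
    ultimately show ?thesis using w1A w2 by (simp add: U_def)
  qed
  show "v1 + v2 \<le> w1 + w2" using sU by (simp add: s_def U_def)
  show "0 \<le> w1 + w2" using w1r w2r by simp
  show "0 \<le> fcv N k (A - w1) (B - w2)" using w1r w2r N P0 unfolding fcv_def P_def[symmetric] by simp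
  have sF: "v1 + v2 + fcv N k (A - v1) (B - v2) = min (s + N) (min (max (A + v2) (s + P)) (A + B))"
    unfolding fcv_def P_def[symmetric] s_def by (simp add: min_add_distrib_left max_add_distrib_left)
  have UF: "w1 + w2 + fcv N k (A - w1) (B - w2) = min (U + N) (min (max (A + w2) (U + P)) (A + B))"
    unfolding fcv_def P_def[symmetric] U_def by (simp add: min_add_distrib_left max_add_distrib_left)
  show "v1 + v2 + fcv N k (A - v1) (B - v2) \<le> 5/4 * (w1 + w2 + fcv N k (A - w1) (B - w2))"
  proof (cases "A + v2 \<le> max (A + w2) (U + P)")
    case True
    have "max (A + v2) (s + P) \<le> max (A + w2) (U + P)"
      using True sU by (simp add: max.coboundedI2)
    then have "min (s + N) (min (max (A + v2) (s + P)) (A + B)) \<le> min (U + N) (min (max (A + w2) (U + P)) (A + B))"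
      using sU by (intro min.mono) auto
    moreover have "0 \<le> min (U + N) (min (max (A + w2) (U + P)) (A + B))"
      using w1r w2r N P0 A B by (simp add: U_def)
    ultimately show ?thesis unfolding sF UF by linarith
  next
    case False
    define Z where "Z = max (A + w2) (U + P)"
    have Z0: "0 \<le> Z" using w2r A unfolding Z_def by simp
    have bnd: "min (s + N) (A + v2) \<le> 5/4 * Z"
    proof (cases "M \<le> A")
      case True
      then have w1M: "w1 = M" and w20: "w2 = 0" using w1 w2 B by auto
      then have ZZ: "Z = max A (M + P)" by (simp add: Z_def U_def)
      show ?thesis
      proof (rule ccontr)
        assume "\<not> ?thesis"
        then have h1: "s + N > 5/4 * Z" and h2: "A + v2 > 5/4 * Z" by (auto simp: min_def split: if_splits)
        have AZ: "A \<le> Z" "M + P \<le> Z" using ZZ by auto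
        have v2Z: "v2 \<ge> Z / 4" using h2 AZ by linarith
        have Nle: "N \<le> k * (Z - M)" using AZ kP k mult_left_mono[of P "Z - M" k] by simp
        have Mk: "k * v2 \<le> M" using v by simp
        have s1: "s \<le> M - (k - 1) * v2" using v by (simp add: s_def algebra_simps)
        have "(k - 1) * (k * v2) \<le> (k - 1) * M" using Mk k by (simp add: mult_left_mono)
        then have "s + N \<le> k * Z - (k - 1) * (k + 1) * v2"
          using s1 Nle by (simp add: algebra_simps)
        also have "\<dots> \<le> k * Z - (k - 1) * (k + 1) * (Z / 4)"
          using v2Z k by (simp add: mult_left_mono)
        also have "\<dots> \<le> 5/4 * Z"
        proof -
          have "0 \<le> (k - 2)^2 * Z" using Z0 by simp
          moreover have "k * Z - (k - 1) * (k + 1) * (Z / 4) = 5/4 * Z - (k - 2)^2 * Z / 4"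
            by (simp add: field_simps power2_eq_square)
          ultimately show ?thesis by linarith
        qed
        finally show False using h1 by simp
      qed
    next
      case False
      then have w1A: "w1 = A" using w1 by auto
      have "v2 > w2" using \<open>\<not> (A + v2 \<le> max (A + w2) (U + P))\<close> by simp
      then have w2e: "w2 = (M - A) / k" using w2 w1A v by auto
      then have kw2: "k * w2 = M - A" using k by simp
      have ZU: "A + w2 + P \<le> Z" by (simp add: Z_def U_def w1A)
      define d where "d = v2 - w2"
      show ?thesis
      proof (cases "d \<le> P")
        case True
        then have "A + v2 \<le> Z" using ZU by (simp add: d_def)
        then show ?thesis using Z0 by (simp add: min_def)
      next
        case False
        have "k * v2 = M - A + k * d" using kw2 by (simp add: d_def algebra_simps)
        then have "v1 \<le> A - k * d" using v by simp
        then have "s \<le> A + w2 - (k - 1) * d" by (simp add: s_def d_def algebra_simps)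
        moreover have "(k - 1) * P \<le> (k - 1) * d" using False k by simp
        ultimately have "s + N \<le> A + w2 + P" using kP by (simp add: algebra_simps)
        then show ?thesis using ZU Z0 by (simp add: min_def)
      qed
    qed
    have mx: "max (A + v2) (s + P) = A + v2" using False sU by simp
    define X where "X = v1 + v2 + fcv N k (A - v1) (B - v2)"
    have X1: "X \<le> min (s + N) (A + v2)"
      unfolding X_def sF mx by (simp add: min.coboundedI2 min.coboundedI1)
    have "0 \<le> U + N" using w1r w2r N by (simp add: U_def)
    then have Xa: "X \<le> 5/4 * (U + N)" using X1 sU min.cobounded1[of "s + N" "A + v2"] unfolding distrib_left by linarith
    have Xb: "X \<le> 5/4 * Z" using X1 bnd by linarith
    have Xc: "X \<le> 5/4 * (A + B)" unfolding X_def sF mx using A B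
      min.cobounded2[of "s + N" "min (A + v2) (A + B)"] min.cobounded2[of "A + v2" "A + B"] unfolding distrib_left by linarith
    have "X \<le> 5/4 * min (U + N) (min Z (A + B))"
      using Xa Xb Xc by (simp add: min_def)
    then show ?thesis unfolding UF X_def Z_def .
  qed
qed

lemma key_R:
  fixes A B k N M w1 w2 v1 v2 c1 c2 R :: real
  assumes A: "0 < A" and B: "0 < B" and k: "1 < k" and N: "0 < N" and M: "0 \<le> M"
    and w1: "w1 = min M A" and w2: "w2 = min ((M - w1)/k) B"
    and v: "0 \<le> v1" "0 \<le> v2" "v1 \<le> A" "v2 \<le> B" "v1 + k * v2 \<le> M"
    and c: "0 \<le> c1" "c1 \<le> A - v1" "0 \<le> c2" "c2 \<le> B - v2"
    and R: "0 \<le> R" "R \<le> 1"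
  shows "v1 + v2 + R * fcv N k c1 c2 \<le> 5/4 * (w1 + w2 + R * fcv N k (A - w1) (B - w2))"
proof -
  note K = key_R1[OF A B k N M w1 w2 v]
  define s where "s = v1 + v2"
  define U where "U = w1 + w2"
  define F where "F = fcv N k (A - v1) (B - v2)"
  define G where "G = fcv N k (A - w1) (B - w2)"
  have 1: "s + F \<le> 5/4 * (U + G)" using K(1) by (simp add: s_def F_def U_def G_def)
  have 2: "s \<le> U" using K(2) by (simp add: s_def U_def)
  have 3: "0 \<le> U" "0 \<le> G" using K(3,4) by (simp_all add: U_def G_def)
  have "fcv N k c1 c2 \<le> F" unfolding F_def using c by (intro fcv_mono) auto
  then have "R * fcv N k c1 c2 \<le> R * F" using R by (simp add: mult_left_mono)
  moreover have "(1 - R) * s \<le> (1 - R) * U" using 2 R by (simp add: mult_left_mono)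
  moreover have "R * (s + F) \<le> R * (5/4 * (U + G))" using mult_left_mono[OF 1 R(1)] by simp
  moreover have "(1 - R) * U \<le> (1 - R) * (5/4 * U)" using 3 R by (simp add: mult_left_mono)
  ultimately have "s + R * fcv N k c1 c2 \<le> 5/4 * (U + R * G)"
    by (simp add: algebra_simps)
  then show ?thesis by (simp add: s_def U_def G_def)
qed

lemma cv_core:
  fixes k a c N w1 w2 :: real
  assumes k: "1 < k" and a: "0 \<le> a" and c: "0 \<le> c" and pos: "0 < a + c" and N: "0 < N"
    and w: "0 \<le> w1" "w1 \<le> a" "0 \<le> w2" "w2 \<le> c"
  defines "u \<equiv> fcv N k a c"
  shows "0 < u" "0 \<le> min u a" "u - min u a \<le> c" "0 \<le> u - min u a"
    "N * (w1 + w2 - u) \<le> u * ((w1 + k * w2) - (min u a + k * (u - min u a)))"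
proof -
  define P where "P = N / k"
  have kP: "k * P = N" using k by (simp add: P_def)
  have P0: "0 < P" using N k by (simp add: P_def)
  have PN: "P < N" using mult_strict_right_mono[OF k P0] kP by simp
  have uu: "u = min N (min (max a P) (a + c))" by (simp add: u_def fcv_def P_def)
  show "0 < u" using N P0 pos uu by simp
  show "0 \<le> min u a" using N P0 pos uu a by simp
  show "u - min u a \<le> c" using uu c by (simp add: min_def max_def)
  show "0 \<le> u - min u a" by simp
  show "N * (w1 + w2 - u) \<le> u * ((w1 + k * w2) - (min u a + k * (u - min u a)))"
  proof (cases "N \<le> a")
    case True
    then have "u = N" using uu c P0 PN by (simp add: min_def max_def)
    moreover have "N * w2 \<le> N * (k * w2)" using mult_right_mono[of 1 k w2] k w N
      by (intro mult_left_mono) auto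
    ultimately show ?thesis using True by (simp add: algebra_simps)
  next
    case aN: False
    show ?thesis
    proof (cases "P \<le> a")
      case True
      then have ue: "u = a" using uu c aN by (simp add: min_def max_def)
      have "N \<le> k * a" using True kP k mult_left_mono[of P a k] by simp
      then have "0 \<le> (N - a) * (a - w1) + (k * a - N) * w2" using aN w by simp
      moreover have "u * ((w1 + k * w2) - (min u a + k * (u - min u a))) - N * (w1 + w2 - u)
          = (N - a) * (a - w1) + (k * a - N) * w2" by (simp add: ue algebra_simps)
      ultimately show ?thesis by linarith
    next
      case Pa: False
      show ?thesis
      proof (cases "P \<le> a + c")
        case True
        then have ue: "u = P" and ma: "min u a = a" using uu c aN Pa PN by (auto simp: min_def max_def)
        have "0 \<le> (N - P) * (a - w1)" using PN w by simp
        moreover have "u * ((w1 + k * w2) - (min u a + k * (u - min u a))) - N * (w1 + w2 - u)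
          = (N - P) * (a - w1)" using ma unfolding ue kP[symmetric] by (simp add: algebra_simps)
        ultimately show ?thesis by linarith
      next
        case False
        then have ue: "u = a + c" and ma: "min u a = a" using uu c aN Pa PN by (auto simp: min_def max_def)
        have "k * (a + c) \<le> N" using False kP k mult_left_mono[of "a + c" P k] by simp
        then have "0 \<le> (N - (a + c)) * (a - w1) + (N - k * (a + c)) * (c - w2)"
          using False PN w by simp
        moreover have "u * ((w1 + k * w2) - (min u a + k * (u - min u a))) - N * (w1 + w2 - u)
          = (N - (a + c)) * (a - w1) + (N - k * (a + c)) * (c - w2)" using ma unfolding ue
          by (simp add: algebra_simps)
        ultimately show ?thesis by linarith
      qed
    qed
  qed
qed

lemma ln_step:
  fixes c u us N T T0 :: real
  assumes c: "0 < c" and u: "0 < u" and us: "0 < us" and N: "0 < N"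
    and sub: "N * (u - us) \<le> us * (T - T0)"
  shows "N * ln (c * u) - T \<le> N * ln (c * us) - T0"
    and "u \<noteq> us \<Longrightarrow> N * ln (c * u) - T < N * ln (c * us) - T0"
proof -
  have e: "N * ln (c * u) - N * ln (c * us) = N * (ln u - ln us)" using c u us by (simp add: ln_mult algebra_simps)
  have s2: "N * ((u - us) / us) \<le> T - T0" using sub us
    by (simp add: pos_divide_le_eq mult.commute mult.left_commute)
  have "N * (ln u - ln us) \<le> N * ((u - us) / us)" using ln_diff_le[OF u us] N by (intro mult_left_mono) auto
  then show "N * ln (c * u) - T \<le> N * ln (c * us) - T0" using e s2 by linarith
  assume "u \<noteq> us"
  then have "N * (ln u - ln us) < N * ((u - us) / us)" using ln_diff_less[OF u us] N by (intro mult_strict_left_mono) auto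
  then show "N * ln (c * u) - T < N * ln (c * us) - T0" using e s2 by linarith
qed


lemma av_unique:
  fixes A B k M w1 w2 v1 v2 :: real
  assumes A: "0 < A" and B: "0 < B" and k: "1 < k" and M: "0 \<le> M"
    and w1: "w1 = min M A" and w2: "w2 = min ((M - w1)/k) B"
    and v: "0 \<le> v1" "0 \<le> v2" "v1 \<le> A" "v2 \<le> B" "v1 + k * v2 \<le> M"
    and ge: "w1 + w2 \<le> v1 + v2"
  shows "v1 = w1 \<and> v2 = w2"
proof (cases "M \<le> A")
  case True
  then have e: "w1 = M" "w2 = 0" using w1 w2 B by auto
  have "(k - 1) * v2 \<le> 0" using v ge e by (simp add: algebra_simps)
  then have "v2 \<le> 0" using k by (simp add: mult_le_0_iff)
  then show ?thesis using v ge e by simp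
next
  case False
  then have w1A: "w1 = A" using w1 by auto
  show ?thesis
  proof (cases "(M - A) / k \<le> B")
    case True
    then have w2e: "w2 = (M - A) / k" using w2 w1A by simp
    then have kw: "k * w2 = M - A" using k by simp
    have "k * (w1 + w2) \<le> k * (v1 + v2)" using ge k by simp
    then have "(k - 1) * A \<le> (k - 1) * v1" using v kw w1A by (simp add: algebra_simps)
    then have "A \<le> v1" using k by simp
    then have v1A: "v1 = A" using v by simp
    then have "k * v2 \<le> k * w2" using v kw by simp
    then have "v2 \<le> w2" using k by simp
    then show ?thesis using v1A w1A ge by simp
  next
    case False
    then have "w2 = B" using w2 w1A by simp
    then show ?thesis using v ge w1A by simp
  qed
qed



declare One_nat_def [simp del]

lemma I2: "{1..2::nat} = {1,2}" by auto

lemma msum2: "msum 2 f x = f 1 1 * x 1 1 + f 1 2 * x 1 2 + f 2 1 * x 2 1 + f 2 2 * x 2 2"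
  unfolding msum_def I2 by simp

lemma colsum2: "colsum 2 x i = x 1 i + x 2 i"
  unfolding colsum_def I2 by simp

lemma nonneg2: "nonneg 2 x \<longleftrightarrow> 0 \<le> x 1 1 \<and> 0 \<le> x 1 2 \<and> 0 \<le> x 2 1 \<and> 0 \<le> x 2 2"
  unfolding nonneg_def I2 by auto

lemma ball2: "(\<forall>i\<in>{1..2::nat}. P i) \<longleftrightarrow> P 1 \<and> P 2"
  unfolding I2 by simp

locale H =
  fixes b :: "nat \<Rightarrow> nat \<Rightarrow> real"
  assumes b12: "b 1 2 = 0" and b22: "b 2 2 = 0" and b11: "0 < b 1 1" and b21: "0 < b 2 1"
begin

lemma brate1: "brate 2 b 1 = b 1 1" and brate2: "brate 2 b 2 = b 2 1"
  unfolding brate_def I2 by (simp_all add: b12 b22)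

lemma qq: "qq 2 b 1 1 = 1" "qq 2 b 1 2 = 0" "qq 2 b 2 1 = 1" "qq 2 b 2 2 = 0"
  using b11 b21 by (simp_all add: qq_def brate1 brate2 b12 b22)

lemma avg: "avgtrip 2 b t 1 = t 1 1" "avgtrip 2 b t 2 = t 2 1"
  unfolding avgtrip_def I2 by (simp_all add: qq)

lemma tau: "tau_dr 2 b t 1 1 = t 1 1" "tau_dr 2 b t 1 2 = t 1 2 + t 2 1"
   "tau_dr 2 b t 2 1 = t 2 1 + t 1 1" "tau_dr 2 b t 2 2 = t 2 1"
  by (simp_all add: tau_dr_def avg)

lemma fb: "flow_balance 2 b x \<longleftrightarrow> x 2 1 + x 2 2 = 0"
  unfolding flow_balance_def ball2
  unfolding I2 by (simp add: colsum2 qq)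

lemma msums:
  "msum 2 (rC 2 b t p 0 R) y = p * (1 - R) * (t 1 1 * y 1 1 + t 2 1 * y 1 2 + t 1 1 * y 2 1 + t 2 1 * y 2 2)"
  "msum 2 (rC2P 2 b t p R) y = p * R * (t 1 1 * y 1 1 + t 2 1 * y 1 2 + t 1 1 * y 2 1 + t 2 1 * y 2 2)"
  "msum 2 (rA 2 b t p 0) y = p * (t 1 1 * y 1 1 + t 2 1 * y 1 2 + t 1 1 * y 2 1 + t 2 1 * y 2 2)"
  "msum 2 (tau_dr 2 b t) y = t 1 1 * y 1 1 + (t 1 2 + t 2 1) * y 1 2 + (t 2 1 + t 1 1) * y 2 1 + t 2 1 * y 2 2"
  by (simp_all add: msum2 rC_def rC2P_def rA_def avg tau algebra_simps)

lemma cvfeas: "cv_feasible 2 b bC y \<longleftrightarrow> y 2 1 = 0 \<and> y 2 2 = 0 \<and> 0 \<le> y 1 1 \<and> y 1 1 \<le> bC 1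
   \<and> 0 \<le> y 1 2 \<and> y 1 2 \<le> bC 2"
  unfolding cv_feasible_def nonneg2 fb ball2 colsum2 by auto

lemma cv_pi_val:
  fixes t :: "nat \<Rightarrow> nat \<Rightarrow> real"
  assumes t11: "0 < t 1 1" and t12: "0 < t 1 2" and t21: "0 < t 2 1"
    and p: "0 < p" and R: "0 < R" "R < 1" and N: "0 < N" and bC: "0 \<le> bC 1" "0 \<le> bC 2"
  shows "cv_pi 2 b t p 0 R N bC = p * R * fcv N ((t 1 2 + t 2 1) / t 2 1) (t 1 1 * bC 1) (t 2 1 * bC 2)"
proof -
  define k where "k = (t 1 2 + t 2 1) / t 2 1"
  define a where "a = t 1 1 * bC 1"
  define c where "c = t 2 1 * bC 2"
  define u where "u = fcv N k a c"
  define w01 where "w01 = min u a"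
  define w02 where "w02 = u - w01"
  have k: "1 < k" using t12 t21 by (simp add: k_def)
  have kt: "k * t 2 1 = t 1 2 + t 2 1" using t21 by (simp add: k_def)
  have a0: "0 \<le> a" and c0: "0 \<le> c" using t11 t21 bC by (simp_all add: a_def c_def)
  have u0: "0 \<le> u" and uac: "u \<le> a + c" using N k a0 c0 by (auto simp: u_def fcv_def)
  have w01r: "0 \<le> w01" "w01 \<le> a" using u0 a0 by (auto simp: w01_def)
  have w02r: "0 \<le> w02" "w02 \<le> c" using uac c0 by (auto simp: w02_def w01_def min_def)
  define x0 :: "nat \<Rightarrow> nat \<Rightarrow> real" where
    "x0 = (\<lambda>i j. if i = 1 \<and> j = 1 then w01 / t 1 1 else if i = 1 \<and> j = 2 then w02 / t 2 1 else 0)"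
  have x0v: "x0 1 1 = w01 / t 1 1" "x0 1 2 = w02 / t 2 1" "x0 2 1 = 0" "x0 2 2 = 0"
    by (simp_all add: x0_def)
  have x0f: "cv_feasible 2 b bC x0"
    unfolding cvfeas x0v using w01r w02r t11 t21
    by (simp add: a_def c_def pos_divide_le_eq mult.commute)
  have x0rev: "t 1 1 * x0 1 1 + t 2 1 * x0 1 2 = u" using t11 t21 by (simp add: x0v w02_def)
  have x0tm: "t 1 1 * x0 1 1 + (t 1 2 + t 2 1) * x0 1 2 = w01 + k * w02"
    using t11 t21 by (simp add: x0v kt[symmetric])
  have pR: "0 < p * (1 - R)" using p R by simp
  have feas_vals: "0 \<le> t 1 1 * y 1 1" "t 1 1 * y 1 1 \<le> a" "0 \<le> t 2 1 * y 1 2" "t 2 1 * y 1 2 \<le> c"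
    "y 2 1 = 0" "y 2 2 = 0" if "cv_feasible 2 b bC y" for y
    using that t11 t21 unfolding cvfeas a_def c_def by (auto intro: mult_left_mono)
  have ytm: "t 1 1 * y 1 1 + (t 1 2 + t 2 1) * y 1 2 = t 1 1 * y 1 1 + k * (t 2 1 * y 1 2)" for y
    by (simp add: kt[symmetric])
  show ?thesis
  proof (cases "a + c = 0")
    case True
    then have ac0: "a = 0" "c = 0" using a0 c0 by auto
    have yz: "t 1 1 * y 1 1 + t 2 1 * y 1 2 = 0" if "cv_feasible 2 b bC y" for y
      using feas_vals[OF that] ac0 by linarith
    have u00: "u = 0" using u0 uac True by simp
    have "cv_optimal 2 b t p 0 R N bC x0"
      unfolding cv_optimal_def using x0f yz
      by (auto simp: cv_obj_def Let_def msums cvfeas)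
    then have "cv_optimal 2 b t p 0 R N bC (SOME x. cv_optimal 2 b t p 0 R N bC x)" by (rule someI[of "cv_optimal 2 b t p 0 R N bC" x0])
    then have "cv_feasible 2 b bC (SOME x. cv_optimal 2 b t p 0 R N bC x)" by (simp add: cv_optimal_def)
    from yz[OF this] feas_vals[OF this] show ?thesis
      by (simp add: cv_pi_def msums u_def[symmetric] a_def[symmetric] c_def[symmetric] k_def[symmetric] u00)
  next
    case False
    then have pos: "0 < a + c" using a0 c0 by simp
    have upos: "0 < u" using cv_core(1)[OF k a0 c0 pos N order.refl a0 order.refl c0] by (simp add: u_def)
    have cmp: "cv_obj 2 b t p 0 R N y \<le> cv_obj 2 b t p 0 R N x0
        \<and> (cv_obj 2 b t p 0 R N x0 \<le> cv_obj 2 b t p 0 R N y \<longrightarrow> t 1 1 * y 1 1 + t 2 1 * y 1 2 = u)"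
      if yf: "cv_feasible 2 b bC y" for y
    proof -
      note fv = feas_vals[OF yf]
      define w1 where "w1 = t 1 1 * y 1 1"
      define w2 where "w2 = t 2 1 * y 1 2"
      have sub: "N * (w1 + w2 - u) \<le> u * ((w1 + k * w2) - (w01 + k * w02))"
        using cv_core(5)[OF k a0 c0 pos N fv(1-4)] by (simp add: u_def w01_def w02_def w1_def w2_def)
      have ox0: "cv_obj 2 b t p 0 R N x0 = ereal (N * ln (p * (1 - R) * u) - (w01 + k * w02))"
        using upos pR x0rev x0tm by (simp add: cv_obj_def Let_def msums x0v)
      show ?thesis
      proof (cases "w1 + w2 = 0")
        case True
        have "cv_obj 2 b t p 0 R N y = -\<infinity>"
          using True fv by (simp add: cv_obj_def Let_def msums w1_def w2_def)
        then show ?thesis using ox0 upos True by (simp add: w1_def w2_def)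
      next
        case False
        then have wpos: "0 < w1 + w2" using fv by (simp add: w1_def w2_def)
        have oy: "cv_obj 2 b t p 0 R N y = ereal (N * ln (p * (1 - R) * (w1 + w2)) - (w1 + k * w2))"
          using wpos pR fv by (simp add: cv_obj_def Let_def msums w1_def w2_def ytm)
        note ls = ln_step[OF pR wpos upos N sub]
        show ?thesis using ls oy ox0 by (auto simp: w1_def w2_def not_le[symmetric])
      qed
    qed
    have "cv_optimal 2 b t p 0 R N bC x0"
      unfolding cv_optimal_def using x0f cmp by blast
    then have opt: "cv_optimal 2 b t p 0 R N bC (SOME x. cv_optimal 2 b t p 0 R N bC x)" by (rule someI[of "cv_optimal 2 b t p 0 R N bC" x0])
    define xs where "xs = (SOME x. cv_optimal 2 b t p 0 R N bC x)"
    have xsf: "cv_feasible 2 b bC xs" and xsge: "cv_obj 2 b t p 0 R N x0 \<le> cv_obj 2 b t p 0 R N xs"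
      using opt x0f by (auto simp: cv_optimal_def xs_def)
    have "t 1 1 * xs 1 1 + t 2 1 * xs 1 2 = u" using cmp[OF xsf] xsge by blast
    then show ?thesis using feas_vals[OF xsf]
      by (simp add: cv_pi_def xs_def[symmetric] msums u_def a_def c_def k_def)
  qed
qed


lemma avfeas: "av_feasible 2 b t M y \<longleftrightarrow> y 2 1 = 0 \<and> y 2 2 = 0 \<and> 0 \<le> y 1 1 \<and> y 1 1 \<le> b 1 1
   \<and> 0 \<le> y 1 2 \<and> y 1 2 \<le> b 2 1 \<and> t 1 1 * y 1 1 + (t 1 2 + t 2 1) * y 1 2 \<le> M"
proof (cases "y 2 1 = 0 \<and> y 2 2 = 0")
  case True then show ?thesis unfolding av_feasible_def nonneg2 fb ball2 colsum2 brate1 brate2 msums by auto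
next
  case False then show ?thesis unfolding av_feasible_def nonneg2 fb ball2 colsum2 brate1 brate2 msums by auto
qed

lemma optfeas: "opt_feasible 2 b t M bC y \<longleftrightarrow> 0 \<le> bC 1 \<and> 0 \<le> bC 2 \<and>
   y 2 1 = 0 \<and> y 2 2 = 0 \<and> 0 \<le> y 1 1 \<and> y 1 1 + bC 1 \<le> b 1 1
   \<and> 0 \<le> y 1 2 \<and> y 1 2 + bC 2 \<le> b 2 1 \<and> t 1 1 * y 1 1 + (t 1 2 + t 2 1) * y 1 2 \<le> M"
proof (cases "y 2 1 = 0 \<and> y 2 2 = 0")
  case True then show ?thesis unfolding opt_feasible_def nonneg2 fb ball2 colsum2 brate1 brate2 msums by auto
next
  case False then show ?thesis unfolding opt_feasible_def nonneg2 fb ball2 colsum2 brate1 brate2 msums by auto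
qed

lemma av_first_vals:
  fixes t :: "nat \<Rightarrow> nat \<Rightarrow> real"
  assumes t11: "0 < t 1 1" and t12: "0 < t 1 2" and t21: "0 < t 2 1"
    and p: "0 < p" and M: "0 \<le> M" and af: "av_first 2 b t p 0 M xA"
  defines "A \<equiv> t 1 1 * b 1 1" and "B \<equiv> t 2 1 * b 2 1" and "k \<equiv> (t 1 2 + t 2 1) / t 2 1"
  shows "xA 2 1 = 0" "xA 2 2 = 0" "t 1 1 * xA 1 1 = min M A"
    "t 2 1 * xA 1 2 = min ((M - min M A) / k) B"
    "0 \<le> xA 1 1" "xA 1 1 \<le> b 1 1" "0 \<le> xA 1 2" "xA 1 2 \<le> b 2 1"
proof -
  have k: "1 < k" using t12 t21 by (simp add: k_def)
  have kt: "k * t 2 1 = t 1 2 + t 2 1" using t21 by (simp add: k_def)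
  have A: "0 < A" and B: "0 < B" using t11 t21 b11 b21 by (simp_all add: A_def B_def)
  define w1 where "w1 = min M A"
  define w2 where "w2 = min ((M - w1) / k) B"
  have w1r: "0 \<le> w1" "w1 \<le> A" using M A by (auto simp: w1_def)
  have w2r: "0 \<le> w2" "w2 \<le> B" using M A B k by (auto simp: w2_def w1_def)
  have wt: "w1 + k * w2 \<le> M"
  proof (cases "M \<le> A")
    case True then show ?thesis using B by (simp add: w1_def w2_def)
  next
    case False
    then have "w1 = A" by (simp add: w1_def)
    moreover have "k * w2 \<le> k * ((M - A) / k)" using k unfolding w2_def \<open>w1 = A\<close>
      by (intro mult_left_mono) auto
    ultimately show ?thesis using k by simp
  qed
  define z :: "nat \<Rightarrow> nat \<Rightarrow> real" where
    "z = (\<lambda>i j. if i = 1 \<and> j = 1 then w1 / t 1 1 else if i = 1 \<and> j = 2 then w2 / t 2 1 else 0)"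
  have zv: "z 1 1 = w1 / t 1 1" "z 1 2 = w2 / t 2 1" "z 2 1 = 0" "z 2 2 = 0" by (simp_all add: z_def)
  have zf: "av_feasible 2 b t M z"
    unfolding avfeas zv using w1r w2r t11 t21 wt
    by (simp add: A_def B_def pos_divide_le_eq mult.commute kt[symmetric] mult.left_commute)
  have xf: "av_feasible 2 b t M xA" using af by (simp add: av_first_def)
  have "msum 2 (rA 2 b t p 0) z \<le> msum 2 (rA 2 b t p 0) xA" using af zf by (simp add: av_first_def)
  then have "p * (w1 + w2) \<le> p * (t 1 1 * xA 1 1 + t 2 1 * xA 1 2)"
    using xf t11 t21 by (simp add: msums zv avfeas)
  then have ge: "w1 + w2 \<le> t 1 1 * xA 1 1 + t 2 1 * xA 1 2" using p by simp
  have xv: "xA 2 1 = 0" "xA 2 2 = 0" "0 \<le> xA 1 1" "xA 1 1 \<le> b 1 1" "0 \<le> xA 1 2" "xA 1 2 \<le> b 2 1"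
     "t 1 1 * xA 1 1 + (t 1 2 + t 2 1) * xA 1 2 \<le> M" using xf by (simp_all add: avfeas)
  have vr: "0 \<le> t 1 1 * xA 1 1" "0 \<le> t 2 1 * xA 1 2" "t 1 1 * xA 1 1 \<le> A" "t 2 1 * xA 1 2 \<le> B"
    "t 1 1 * xA 1 1 + k * (t 2 1 * xA 1 2) \<le> M"
    using xv t11 t21 by (auto simp: A_def B_def kt[symmetric] mult.left_commute)
  from av_unique[OF A B k M w1_def w2_def vr ge]
  show "t 1 1 * xA 1 1 = min M A" "t 2 1 * xA 1 2 = min ((M - min M A) / k) B"
    by (simp_all add: w1_def w2_def)
  show "xA 2 1 = 0" "xA 2 2 = 0" "0 \<le> xA 1 1" "xA 1 1 \<le> b 1 1" "0 \<le> xA 1 2" "xA 1 2 \<le> b 2 1"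
    using xv by simp_all
qed


lemma opt_elem:
  fixes t :: "nat \<Rightarrow> nat \<Rightarrow> real"
  assumes t11: "0 < t 1 1" and t12: "0 < t 1 2" and t21: "0 < t 2 1"
    and p: "0 < p" and R: "0 < R" "R < 1" and N: "0 < N" and of: "opt_feasible 2 b t M bC y"
  defines "A \<equiv> t 1 1 * b 1 1" and "B \<equiv> t 2 1 * b 2 1" and "k \<equiv> (t 1 2 + t 2 1) / t 2 1"
  shows "msum 2 (rA 2 b t p 0) y + cv_pi 2 b t p 0 R N bC
     = p * (t 1 1 * y 1 1 + t 2 1 * y 1 2 + R * fcv N k (t 1 1 * bC 1) (t 2 1 * bC 2))"
    "0 \<le> t 1 1 * y 1 1" "0 \<le> t 2 1 * y 1 2" "t 1 1 * y 1 1 \<le> A" "t 2 1 * y 1 2 \<le> B"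
    "t 1 1 * y 1 1 + k * (t 2 1 * y 1 2) \<le> M"
    "0 \<le> t 1 1 * bC 1" "t 1 1 * bC 1 \<le> A - t 1 1 * y 1 1"
    "0 \<le> t 2 1 * bC 2" "t 2 1 * bC 2 \<le> B - t 2 1 * y 1 2"
proof -
  have kt: "k * t 2 1 = t 1 2 + t 2 1" using t21 by (simp add: k_def)
  note fv = of[unfolded optfeas]
  have cv: "cv_pi 2 b t p 0 R N bC = p * R * fcv N k (t 1 1 * bC 1) (t 2 1 * bC 2)"
    using cv_pi_val[OF t11 t12 t21 p R N] fv by (simp add: k_def)
  show "msum 2 (rA 2 b t p 0) y + cv_pi 2 b t p 0 R N bC
     = p * (t 1 1 * y 1 1 + t 2 1 * y 1 2 + R * fcv N k (t 1 1 * bC 1) (t 2 1 * bC 2))"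
    using fv by (simp add: cv msums algebra_simps)
  show "0 \<le> t 1 1 * y 1 1" "0 \<le> t 2 1 * y 1 2" "0 \<le> t 1 1 * bC 1" "0 \<le> t 2 1 * bC 2"
    using fv t11 t21 by simp_all
  show "t 1 1 * y 1 1 + k * (t 2 1 * y 1 2) \<le> M" using fv by (simp add: kt[symmetric] mult.left_commute)
  have h1: "t 1 1 * y 1 1 + t 1 1 * bC 1 \<le> A"
    using mult_left_mono[of "y 1 1 + bC 1" "b 1 1" "t 1 1"] fv t11 unfolding A_def by (simp add: distrib_left)
  have h2: "t 2 1 * y 1 2 + t 2 1 * bC 2 \<le> B"
    using mult_left_mono[of "y 1 2 + bC 2" "b 2 1" "t 2 1"] fv t21 unfolding B_def by (simp add: distrib_left)
  have h3: "0 \<le> t 1 1 * bC 1" "0 \<le> t 2 1 * bC 2" "0 \<le> t 1 1 * y 1 1" "0 \<le> t 2 1 * y 1 2"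
    using fv t11 t21 by simp_all
  show "t 1 1 * y 1 1 \<le> A" "t 2 1 * y 1 2 \<le> B" "t 1 1 * bC 1 \<le> A - t 1 1 * y 1 1"
    "t 2 1 * bC 2 \<le> B - t 2 1 * y 1 2" using h1 h2 h3 by linarith+
qed

lemma af_value:
  fixes t :: "nat \<Rightarrow> nat \<Rightarrow> real"
  assumes t11: "0 < t 1 1" and t12: "0 < t 1 2" and t21: "0 < t 2 1"
    and p: "0 < p" and R: "0 < R" "R < 1" and N: "0 < N" and M: "0 \<le> M"
    and af: "av_first 2 b t p 0 M xA"
  defines "A \<equiv> t 1 1 * b 1 1" and "B \<equiv> t 2 1 * b 2 1" and "k \<equiv> (t 1 2 + t 2 1) / t 2 1"
  shows "av_first_profit 2 b t p 0 R N xA = p * (min M A + min ((M - min M A) / k) B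
     + R * fcv N k (A - min M A) (B - min ((M - min M A) / k) B))"
proof -
  note av = av_first_vals[OF t11 t12 t21 p M af]
  have cv: "cv_pi 2 b t p 0 R N (\<lambda>i. brate 2 b i - colsum 2 xA i)
      = p * R * fcv N k (t 1 1 * (b 1 1 - xA 1 1)) (t 2 1 * (b 2 1 - xA 1 2))"
    using cv_pi_val[OF t11 t12 t21 p R N, of "\<lambda>i. brate 2 b i - colsum 2 xA i"] av
    by (simp add: brate1 brate2 colsum2 k_def)
  show ?thesis unfolding av_first_profit_def cv
    using av by (simp add: msums right_diff_distrib A_def B_def k_def algebra_simps)
qed

lemma part1:
  fixes t :: "nat \<Rightarrow> nat \<Rightarrow> real"
  assumes t11: "0 < t 1 1" and t12: "0 < t 1 2" and t21: "0 < t 2 1"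
    and p: "0 < p" and R: "0 < R" "R < 1" and N: "0 < N" and M: "0 \<le> M"
    and af: "av_first 2 b t p 0 M xA"
  shows "\<forall>z \<in> {msum 2 (rA 2 b t p 0) xA + cv_pi 2 b t p 0 R N bC | bC xA. opt_feasible 2 b t M bC xA}.
           z \<le> 5/4 * av_first_profit 2 b t p 0 R N xA"
    and "4/5 * opt_value 2 b t p 0 R N M \<le> av_first_profit 2 b t p 0 R N xA"
proof -
  define A where "A = t 1 1 * b 1 1"
  define B where "B = t 2 1 * b 2 1"
  define k where "k = (t 1 2 + t 2 1) / t 2 1"
  have A: "0 < A" and B: "0 < B" using t11 t21 b11 b21 by (simp_all add: A_def B_def)
  have k: "1 < k" using t12 t21 by (simp add: k_def)
  define w1 where "w1 = min M A"
  define w2 where "w2 = min ((M - w1) / k) B"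
  have AF: "av_first_profit 2 b t p 0 R N xA = p * (w1 + w2 + R * fcv N k (A - w1) (B - w2))"
    using af_value[OF t11 t12 t21 p R N M af] by (simp add: A_def B_def k_def w1_def w2_def)
  define S where "S = {msum 2 (rA 2 b t p 0) xA + cv_pi 2 b t p 0 R N bC | bC xA. opt_feasible 2 b t M bC xA}"
  have bound: "z \<le> 5/4 * av_first_profit 2 b t p 0 R N xA" if zS: "z \<in> S" for z
  proof -
    obtain bC y where zz: "z = msum 2 (rA 2 b t p 0) y + cv_pi 2 b t p 0 R N bC"
      and of: "opt_feasible 2 b t M bC y" using zS unfolding S_def by blast
    note oe = opt_elem[OF t11 t12 t21 p R N of]
    have "t 1 1 * y 1 1 + t 2 1 * y 1 2 + R * fcv N k (t 1 1 * bC 1) (t 2 1 * bC 2)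
        \<le> 5/4 * (w1 + w2 + R * fcv N k (A - w1) (B - w2))"
      by (rule key_R[OF A B k N M w1_def w2_def oe(2-10)[folded A_def B_def k_def]])
        (use R in auto)
    then have "p * (t 1 1 * y 1 1 + t 2 1 * y 1 2 + R * fcv N k (t 1 1 * bC 1) (t 2 1 * bC 2))
        \<le> p * (5/4 * (w1 + w2 + R * fcv N k (A - w1) (B - w2)))" using p by (simp add: mult_left_mono)
    also have "\<dots> = 5/4 * (p * (w1 + w2 + R * fcv N k (A - w1) (B - w2)))" by (simp only: mult.left_commute)
    finally show ?thesis unfolding zz oe(1)[folded k_def] AF .
  qed
  then show "\<forall>z \<in> {msum 2 (rA 2 b t p 0) xA + cv_pi 2 b t p 0 R N bC | bC xA. opt_feasible 2 b t M bC xA}.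
           z \<le> 5/4 * av_first_profit 2 b t p 0 R N xA" by (simp add: S_def)
  have "opt_feasible 2 b t M (\<lambda>i. 0) (\<lambda>i j. 0)" using M b11 b21 by (simp add: optfeas)
  then have Sne: "S \<noteq> {}" by (auto simp: S_def)
  have "Sup S \<le> 5/4 * av_first_profit 2 b t p 0 R N xA" using Sne bound by (rule cSup_least)
  then show "4/5 * opt_value 2 b t p 0 R N M \<le> av_first_profit 2 b t p 0 R N xA"
    by (simp add: opt_value_def S_def[symmetric])
qed

end

theorem lemma3:
  shows "(\<forall>(b::nat \<Rightarrow> nat \<Rightarrow> real) (t::nat \<Rightarrow> nat \<Rightarrow> real) (p::real) (R::real) (M::real) (N::real) xA.
            b 1 2 = 0 \<and> b 2 2 = 0 \<and> 0 < b 1 1 \<and> 0 < b 2 1 \<and>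
            0 < t 1 1 \<and> 0 < t 1 2 \<and> 0 < t 2 1 \<and> 0 \<le> t 2 2 \<and>
            0 < p \<and> 0 < R \<and> R < 1 \<and> 0 \<le> M \<and> 0 < N \<and>
            av_first 2 b t p 0 M xA
          \<longrightarrow> av_first_profit 2 b t p 0 R N xA \<ge> 4/5 * opt_value 2 b t p 0 R N M)
       \<and>
         (\<exists>(b::nat \<Rightarrow> nat \<Rightarrow> real) (t::nat \<Rightarrow> nat \<Rightarrow> real) (p::real).
            b 1 2 = 0 \<and> b 2 2 = 0 \<and> 0 < b 1 1 \<and> 0 < b 2 1 \<and>
            0 < t 1 1 \<and> 0 < t 1 2 \<and> 0 < t 2 1 \<and> 0 \<le> t 2 2 \<and> 0 < p \<and>
            t 1 2 = t 2 1 \<and>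
            (let M = b 1 1 * t 1 1 / 2; N = b 1 1 * t 1 1 in
             \<forall>xh :: real \<Rightarrow> nat \<Rightarrow> nat \<Rightarrow> real.
               (\<forall>R\<in>{0<..<1}. av_first 2 b t p 0 M (xh R)) \<longrightarrow>
               ((\<lambda>R. 1 - av_first_profit 2 b t p 0 R N (xh R) / opt_value 2 b t p 0 R N M)
                  \<longlongrightarrow> 1/5) (at_left 1)))"
proof (rule conjI)
  show "\<forall>(b::nat \<Rightarrow> nat \<Rightarrow> real) (t::nat \<Rightarrow> nat \<Rightarrow> real) (p::real) (R::real) (M::real) (N::real) xA.
            b 1 2 = 0 \<and> b 2 2 = 0 \<and> 0 < b 1 1 \<and> 0 < b 2 1 \<and>
            0 < t 1 1 \<and> 0 < t 1 2 \<and> 0 < t 2 1 \<and> 0 \<le> t 2 2 \<and>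
            0 < p \<and> 0 < R \<and> R < 1 \<and> 0 \<le> M \<and> 0 < N \<and>
            av_first 2 b t p 0 M xA
          \<longrightarrow> av_first_profit 2 b t p 0 R N xA \<ge> 4/5 * opt_value 2 b t p 0 R N M"
  proof (intro allI impI)
    fix b t :: "nat \<Rightarrow> nat \<Rightarrow> real" and p R M N :: real and xA
    assume h: "b 1 2 = 0 \<and> b 2 2 = 0 \<and> 0 < b 1 1 \<and> 0 < b 2 1 \<and>
            0 < t 1 1 \<and> 0 < t 1 2 \<and> 0 < t 2 1 \<and> 0 \<le> t 2 2 \<and>
            0 < p \<and> 0 < R \<and> R < 1 \<and> 0 \<le> M \<and> 0 < N \<and>
            av_first 2 b t p 0 M xA"
    then interpret H b by unfold_locales auto
    show "av_first_profit 2 b t p 0 R N xA \<ge> 4/5 * opt_value 2 b t p 0 R N M"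
      using part1(2)[of t p R N M xA] h by auto
  qed
next
  define b0 :: "nat \<Rightarrow> nat \<Rightarrow> real" where "b0 = (\<lambda>i j. if j = 1 then 1 else 0)"
  define t0 :: "nat \<Rightarrow> nat \<Rightarrow> real" where "t0 = (\<lambda>i j. if i = 2 \<and> j = 2 then 0 else 1)"
  have bv: "b0 1 2 = 0" "b0 2 2 = 0" "b0 1 1 = 1" "b0 2 1 = 1" by (simp_all add: b0_def)
  have tv: "t0 1 1 = 1" "t0 1 2 = 1" "t0 2 1 = 1" "t0 2 2 = 0" by (simp_all add: t0_def)
  interpret H b0 by unfold_locales (simp_all add: bv)
  have t11: "0 < t0 1 1" and t12: "0 < t0 1 2" and t21: "0 < t0 2 1" by (simp_all add: tv)
  have p1: "(0::real) < 1" by simp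
  have M0: "(0::real) \<le> 1/2" by simp
  have main: "((\<lambda>R. 1 - av_first_profit 2 b0 t0 1 0 R 1 (xh R) / opt_value 2 b0 t0 1 0 R 1 (1/2))
                  \<longlongrightarrow> 1/5) (at_left 1)"
    if xh: "\<forall>R\<in>{0<..<1}. av_first 2 b0 t0 1 0 (1/2) (xh R)" for xh :: "real \<Rightarrow> nat \<Rightarrow> nat \<Rightarrow> real"
  proof -
    have bounds: "1 - (1/2 + R/2) / (1/4 + R) \<le> 1 - av_first_profit 2 b0 t0 1 0 R 1 (xh R) / opt_value 2 b0 t0 1 0 R 1 (1/2)
       \<and> 1 - av_first_profit 2 b0 t0 1 0 R 1 (xh R) / opt_value 2 b0 t0 1 0 R 1 (1/2) \<le> 1/5"
      if R: "0 < R" "R < 1" for R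
    proof -
      have af: "av_first 2 b0 t0 1 0 (1/2) (xh R)" using xh R by auto
      have AF: "av_first_profit 2 b0 t0 1 0 R 1 (xh R) = 1/2 + R/2"
        using af_value[OF t11 t12 t21 p1 R p1 M0 af] by (simp add: tv bv fcv_def)
      note P1 = part1[OF t11 t12 t21 p1 R p1 M0 af]
      define S where "S = {msum 2 (rA 2 b0 t0 1 0) xA + cv_pi 2 b0 t0 1 0 R 1 bC | bC xA. opt_feasible 2 b0 t0 (1/2) bC xA}"
      define bC :: "nat \<Rightarrow> real" where "bC = (\<lambda>i. if i = 1 then 1 else 3/4)"
      define y :: "nat \<Rightarrow> nat \<Rightarrow> real" where "y = (\<lambda>i j. if i = 1 \<and> j = 2 then 1/4 else 0)"
      have of: "opt_feasible 2 b0 t0 (1/2) bC y" by (simp add: optfeas bC_def y_def bv tv)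
      have el: "msum 2 (rA 2 b0 t0 1 0) y + cv_pi 2 b0 t0 1 0 R 1 bC = 1/4 + R"
        using opt_elem(1)[OF t11 t12 t21 p1 R p1 of] by (simp add: tv bC_def y_def fcv_def)
      have "1/4 + R \<in> S" unfolding S_def using of el[symmetric] by blast
      moreover have "bdd_above S" using P1(1) unfolding S_def[symmetric]
        by (intro bdd_aboveI[of _ "5/4 * av_first_profit 2 b0 t0 1 0 R 1 (xh R)"]) auto
      ultimately have lo: "1/4 + R \<le> opt_value 2 b0 t0 1 0 R 1 (1/2)"
        unfolding opt_value_def S_def[symmetric] by (rule cSup_upper)
      have hi: "4/5 * opt_value 2 b0 t0 1 0 R 1 (1/2) \<le> 1/2 + R/2" using P1(2) AF by simp
      define Ov where "Ov = opt_value 2 b0 t0 1 0 R 1 (1/2)"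
      have Opos: "0 < Ov" using lo R by (simp add: Ov_def)
      have "(1/2 + R/2) / Ov \<le> (1/2 + R/2) / (1/4 + R)"
        using lo R Opos by (intro divide_left_mono) (auto simp: Ov_def)
      moreover have "4/5 \<le> (1/2 + R/2) / Ov" using hi Opos by (simp add: Ov_def pos_le_divide_eq)
      ultimately show ?thesis unfolding AF Ov_def[symmetric] by simp
    qed
    have ev: "eventually (\<lambda>R. R \<in> {0<..<1}) (at_left (1::real))"
      by (rule eventually_at_left_real) simp
    have lim: "((\<lambda>R::real. 1 - (1/2 + R/2) / (1/4 + R)) \<longlongrightarrow> 1 - (1/2 + 1/2) / (1/4 + 1)) (at_left 1)"
      by (intro tendsto_intros) auto
    show ?thesis
    proof (rule tendsto_sandwich[OF _ _ _ tendsto_const])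
      show "\<forall>\<^sub>F R in at_left 1. 1 - (1/2 + R/2) / (1/4 + R) \<le> 1 - av_first_profit 2 b0 t0 1 0 R 1 (xh R) / opt_value 2 b0 t0 1 0 R 1 (1/2)"
        using ev by eventually_elim (use bounds in auto)
      show "\<forall>\<^sub>F R in at_left 1. 1 - av_first_profit 2 b0 t0 1 0 R 1 (xh R) / opt_value 2 b0 t0 1 0 R 1 (1/2) \<le> 1/5"
        using ev by eventually_elim (use bounds in auto)
      show "((\<lambda>R::real. 1 - (1/2 + R/2) / (1/4 + R)) \<longlongrightarrow> 1/5) (at_left 1)"
        using lim by simp
    qed
  qed
  show "\<exists>(b::nat \<Rightarrow> nat \<Rightarrow> real) (t::nat \<Rightarrow> nat \<Rightarrow> real) (p::real).
            b 1 2 = 0 \<and> b 2 2 = 0 \<and> 0 < b 1 1 \<and> 0 < b 2 1 \<and>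
            0 < t 1 1 \<and> 0 < t 1 2 \<and> 0 < t 2 1 \<and> 0 \<le> t 2 2 \<and> 0 < p \<and>
            t 1 2 = t 2 1 \<and>
            (let M = b 1 1 * t 1 1 / 2; N = b 1 1 * t 1 1 in
             \<forall>xh :: real \<Rightarrow> nat \<Rightarrow> nat \<Rightarrow> real.
               (\<forall>R\<in>{0<..<1}. av_first 2 b t p 0 M (xh R)) \<longrightarrow>
               ((\<lambda>R. 1 - av_first_profit 2 b t p 0 R N (xh R) / opt_value 2 b t p 0 R N M)
                  \<longlongrightarrow> 1/5) (at_left 1))"
    by (rule exI[of _ b0], rule exI[of _ t0], rule exI[of _ 1]) (use main in \<open>simp add: bv tv Let_def\<close>)
qed

end
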